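(* Let $k,j\ge1$ and let $Y_k=\mathrm{diag}(y_k(x_0),\dots,y_k(x_{N-1}))$ and $Y_j=\mathrm{diag}(y_j(x_0),\dots,y_j(x_{N-1}))$ be diagonal matrices of samples of smooth periodic functions $y_k,y_j$. Then $$\mathrm{ht}([Y_kD_k,Y_jD_j])\le k+j-1.$$
   Context: Uniform periodic grid $x_i=a+(b-a)\frac iN$, $i=0,\dots,N-1$. $D_F=N\cdot M$ where $M$ is the $N\times N$ circulant matrix with $-1$ on the diagonal, $1$ on the superdiagonal and $1$ in the bottom-left corner; $D_B=-D_F^\dagger$; $D_2=D_BD_F=D_FD_B$. $D_k=D_2^{k/2}$ for $k$ even and $D_k=D_FD_2^{(k-1)/2}$ for $k$ odd. An $N\times N$ matrix $P$ (family indexed by $N$) has height $m$ if $m$ is the highest order such that $\|P\|_2$ grows as $N^m$ as $N\to\infty$; $\mathrm{ht}(P)\le m$ means $\|P\|_2=O(N^m)$. *)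

theory Defs
  imports "HOL-Analysis.Derivative" "Jordan_Normal_Form.Matrix" "HOL-Library.Landau_Symbols"
begin

definition grid_pt :: "real \<Rightarrow> real \<Rightarrow> nat \<Rightarrow> nat \<Rightarrow> real" where
  "grid_pt a b N i = a + (b - a) * real i / real N"

definition circM :: "nat \<Rightarrow> real mat" where
  "circM N = mat N N (\<lambda>(i, l). (if l = i then -1 else 0) + (if l = (i + 1) mod N then 1 else 0))"

definition DF :: "nat \<Rightarrow> real mat" where
  "DF N = real N \<cdot>\<^sub>m circM N"

text \<open>D_B = - D_F^dagger (real matrices: adjoint = transpose).\<close>
definition DB :: "nat \<Rightarrow> real mat" where
  "DB N = - transpose_mat (DF N)"

definition D2 :: "nat \<Rightarrow> real mat" where
  "D2 N = DB N * DF N"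

definition Dk :: "nat \<Rightarrow> nat \<Rightarrow> real mat" where
  "Dk k N = (if even k then D2 N ^\<^sub>m (k div 2) else DF N * (D2 N ^\<^sub>m ((k - 1) div 2)))"

definition Ysamp :: "(real \<Rightarrow> real) \<Rightarrow> real \<Rightarrow> real \<Rightarrow> nat \<Rightarrow> real mat" where
  "Ysamp y a b N = mat N N (\<lambda>(i, l). if i = l then y (grid_pt a b N i) else 0)"

definition commutator :: "real mat \<Rightarrow> real mat \<Rightarrow> real mat" where
  "commutator A B = A * B - B * A"

definition vnorm2 :: "real vec \<Rightarrow> real" where
  "vnorm2 x = sqrt (\<Sum>i<dim_vec x. (x $ i)^2)"

definition mat_norm2 :: "real mat \<Rightarrow> real" where
  "mat_norm2 A = Sup {vnorm2 (A *\<^sub>v x) | x. dim_vec x = dim_col A \<and> vnorm2 x \<le> 1}"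

definition ht_le :: "(nat \<Rightarrow> real mat) \<Rightarrow> nat \<Rightarrow> bool" where
  "ht_le P m \<longleftrightarrow> (\<lambda>N. mat_norm2 (P N)) \<in> O(\<lambda>N. real N ^ m)"

definition smooth_fun :: "(real \<Rightarrow> real) \<Rightarrow> bool" where
  "smooth_fun f \<longleftrightarrow> (\<forall>n x. ((deriv ^^ n) f) differentiable (at x))"

definition periodic_on_len :: "real \<Rightarrow> (real \<Rightarrow> real) \<Rightarrow> bool" where
  "periodic_on_len L f \<longleftrightarrow> (\<forall>x. f (x + L) = f x)"

end

theory Submission
  imports Defs
begin

definition bnd :: "real mat \<Rightarrow> real \<Rightarrow> bool" where
"bnd A c \<longleftrightarrow> 0 \<le> c \<and> (\<forall>i<dim_row A. (\<Sum>l<dim_col A. \<bar>A$$(i,l)\<bar>) \<le> c)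
   \<and> (\<forall>l<dim_col A. (\<Sum>i<dim_row A. \<bar>A$$(i,l)\<bar>) \<le> c)"

lemma cs_row:
  fixes a x :: "nat \<Rightarrow> real"
  shows "(\<Sum>l<m. a l * x l)\<^sup>2 \<le> (\<Sum>l<m. \<bar>a l\<bar>) * (\<Sum>l<m. \<bar>a l\<bar> * (x l)\<^sup>2)"
proof -
  have "\<bar>\<Sum>l<m. a l * x l\<bar> \<le> (\<Sum>l<m. \<bar>a l\<bar> * \<bar>x l\<bar>)"
    by (metis (no_types, lifting) abs_mult sum.cong sum_abs)
  hence "(\<Sum>l<m. a l * x l)\<^sup>2 \<le> (\<Sum>l<m. \<bar>a l\<bar> * \<bar>x l\<bar>)\<^sup>2"
    by (metis abs_ge_zero order_trans power2_abs power_mono)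
  also have "(\<Sum>l<m. \<bar>a l\<bar> * \<bar>x l\<bar>) = (\<Sum>l<m. sqrt \<bar>a l\<bar> * (sqrt \<bar>a l\<bar> * \<bar>x l\<bar>))"
    by (rule sum.cong) (auto simp: mult.assoc[symmetric])
  also have "(\<dots>)\<^sup>2 \<le> (\<Sum>l<m. (sqrt \<bar>a l\<bar>)\<^sup>2) * (\<Sum>l<m. (sqrt \<bar>a l\<bar> * \<bar>x l\<bar>)\<^sup>2)"
    by (rule Cauchy_Schwarz_ineq_sum)
  also have "\<dots> = (\<Sum>l<m. \<bar>a l\<bar>) * (\<Sum>l<m. \<bar>a l\<bar> * (x l)\<^sup>2)"
    by (simp add: power_mult_distrib)
  finally show ?thesis .
qed

lemma bnd_quad:
  assumes "bnd A c" and x: "dim_vec x = dim_col A"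
  shows "(\<Sum>i<dim_row A. ((A *\<^sub>v x) $ i)\<^sup>2) \<le> c\<^sup>2 * (\<Sum>l<dim_col A. (x $ l)\<^sup>2)"
proof -
  let ?n = "dim_row A" and ?m = "dim_col A"
  have c0: "0 \<le> c" and R: "\<And>i. i < ?n \<Longrightarrow> (\<Sum>l<?m. \<bar>A$$(i,l)\<bar>) \<le> c"
    and C: "\<And>l. l < ?m \<Longrightarrow> (\<Sum>i<?n. \<bar>A$$(i,l)\<bar>) \<le> c" using assms(1) by (auto simp: bnd_def)
  have e: "(A *\<^sub>v x) $ i = (\<Sum>l<?m. A$$(i,l) * x $ l)" if "i < ?n" for i
    using that x by (simp add: scalar_prod_def lessThan_atLeast0)
  have "(\<Sum>i<?n. ((A *\<^sub>v x) $ i)\<^sup>2) \<le> (\<Sum>i<?n. c * (\<Sum>l<?m. \<bar>A$$(i,l)\<bar> * (x $ l)\<^sup>2))"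
  proof (rule sum_mono)
    fix i assume i: "i \<in> {..<?n}"
    have "((A *\<^sub>v x) $ i)\<^sup>2 \<le> (\<Sum>l<?m. \<bar>A$$(i,l)\<bar>) * (\<Sum>l<?m. \<bar>A$$(i,l)\<bar> * (x $ l)\<^sup>2)"
      using e[of i] i cs_row[of "\<lambda>l. A$$(i,l)" "\<lambda>l. x $ l" ?m] by simp
    also have "\<dots> \<le> c * (\<Sum>l<?m. \<bar>A$$(i,l)\<bar> * (x $ l)\<^sup>2)"
      by (rule mult_right_mono) (use R i in \<open>auto intro: sum_nonneg\<close>)
    finally show "((A *\<^sub>v x) $ i)\<^sup>2 \<le> c * (\<Sum>l<?m. \<bar>A$$(i,l)\<bar> * (x $ l)\<^sup>2)" .
  qed
  also have "\<dots> = c * (\<Sum>l<?m. (\<Sum>i<?n. \<bar>A$$(i,l)\<bar>) * (x $ l)\<^sup>2)"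
    by (simp add: sum_distrib_left[symmetric] sum_distrib_right sum.swap[of _ "{..<?n}"])
  also have "\<dots> \<le> c * (\<Sum>l<?m. c * (x $ l)\<^sup>2)"
    by (intro mult_left_mono sum_mono mult_right_mono) (use C c0 in auto)
  also have "\<dots> = c\<^sup>2 * (\<Sum>l<?m. (x $ l)\<^sup>2)"
    by (simp add: sum_distrib_left power2_eq_square mult.assoc)
  finally show ?thesis .
qed

lemma bnd_norm:
  assumes "bnd A c"
  shows "mat_norm2 A \<le> c" "0 \<le> mat_norm2 A"
proof -
  let ?S = "{vnorm2 (A *\<^sub>v x) | x. dim_vec x = dim_col A \<and> vnorm2 x \<le> 1}"
  have c0: "0 \<le> c" using assms by (simp add: bnd_def)
  have ub: "v \<le> c" if "v \<in> ?S" for v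
  proof -
    from that obtain x where x: "dim_vec x = dim_col A" "vnorm2 x \<le> 1" and v: "v = vnorm2 (A *\<^sub>v x)" by auto
    have "v\<^sup>2 = (\<Sum>i<dim_row A. ((A *\<^sub>v x) $ i)\<^sup>2)" unfolding v vnorm2_def
      by (simp add: sum_nonneg)
    also have "\<dots> \<le> c\<^sup>2 * (\<Sum>l<dim_col A. (x $ l)\<^sup>2)" by (rule bnd_quad[OF assms x(1)])
    also have "(\<Sum>l<dim_col A. (x $ l)\<^sup>2) = (vnorm2 x)\<^sup>2" unfolding vnorm2_def using x(1)
      by (simp add: sum_nonneg)
    finally have "v\<^sup>2 \<le> c\<^sup>2 * (vnorm2 x)\<^sup>2" .
    moreover have "(vnorm2 x)\<^sup>2 \<le> 1" using x(2) unfolding vnorm2_def by (simp add: sum_nonneg)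
    ultimately have "v\<^sup>2 \<le> c\<^sup>2" by (meson mult_left_le order_trans zero_le_power2)
    moreover have "0 \<le> v" unfolding v vnorm2_def by (simp add: sum_nonneg)
    ultimately show ?thesis using c0 by (meson power2_le_imp_le)
  qed
  have z: "0 \<in> ?S"
  proof -
    have "vnorm2 (A *\<^sub>v 0\<^sub>v (dim_col A)) = 0" unfolding vnorm2_def by simp
    moreover have "vnorm2 (0\<^sub>v (dim_col A)) \<le> 1" unfolding vnorm2_def by simp
    ultimately show ?thesis by force
  qed
  show "mat_norm2 A \<le> c" unfolding mat_norm2_def
    by (rule cSup_least) (use z ub in auto)
  show "0 \<le> mat_norm2 A" unfolding mat_norm2_def
    by (rule cSup_upper[OF z]) (use ub in \<open>auto simp: bdd_above_def\<close>)
qed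

lemma mult_idx:
  assumes "A \<in> carrier_mat n m" "B \<in> carrier_mat m p" "i < n" "l < p"
  shows "(A * B) $$ (i,l) = (\<Sum>q<m. A$$(i,q) * B$$(q,l))"
  using assms by (simp add: scalar_prod_def lessThan_atLeast0)

lemma bnd_mono: "bnd A c \<Longrightarrow> c \<le> d \<Longrightarrow> bnd A d"
  unfolding bnd_def by force

lemma bnd_nonneg: "bnd A c \<Longrightarrow> 0 \<le> c"
  unfolding bnd_def by simp

lemma bnd_add:
  assumes "A \<in> carrier_mat n m" "B \<in> carrier_mat n m" "bnd A c" "bnd B d"
  shows "bnd (A + B) (c + d)"
proof -
  have R: "(\<Sum>l<m. \<bar>(A+B)$$(i,l)\<bar>) \<le> c + d" if "i < n" for i
  proof -
    have "(\<Sum>l<m. \<bar>(A+B)$$(i,l)\<bar>) \<le> (\<Sum>l<m. \<bar>A$$(i,l)\<bar> + \<bar>B$$(i,l)\<bar>)"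
      by (rule sum_mono) (use assms that in auto)
    also have "\<dots> \<le> c + d" using assms that by (simp add: sum.distrib bnd_def add_mono)
    finally show ?thesis .
  qed
  have C: "(\<Sum>i<n. \<bar>(A+B)$$(i,l)\<bar>) \<le> c + d" if "l < m" for l
  proof -
    have "(\<Sum>i<n. \<bar>(A+B)$$(i,l)\<bar>) \<le> (\<Sum>i<n. \<bar>A$$(i,l)\<bar> + \<bar>B$$(i,l)\<bar>)"
      by (rule sum_mono) (use assms that in auto)
    also have "\<dots> \<le> c + d" using assms that by (simp add: sum.distrib bnd_def add_mono)
    finally show ?thesis .
  qed
  show ?thesis using R C assms by (simp add: bnd_def)
qed

lemma bnd_uminus: "bnd A c \<Longrightarrow> bnd (- A) c"
  unfolding bnd_def by simp

lemma bnd_minus: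
  assumes "A \<in> carrier_mat n m" "B \<in> carrier_mat n m" "bnd A c" "bnd B d"
  shows "bnd (A - B) (c + d)"
proof -
  have "A - B = A + (- B)" using assms by (simp add: minus_add_uminus_mat)
  thus ?thesis using bnd_add[OF assms(1) _ assms(3) bnd_uminus[OF assms(4)]] assms(2) by simp
qed

lemma bnd_smult: "bnd A c \<Longrightarrow> bnd (r \<cdot>\<^sub>m A) (\<bar>r\<bar> * c)"
  unfolding bnd_def by (simp add: abs_mult sum_distrib_left[symmetric] mult_left_mono)

lemma bnd_transpose: "bnd A c \<Longrightarrow> bnd (transpose_mat A) c"
  unfolding bnd_def by simp

lemma bnd_mult:
  assumes "A \<in> carrier_mat n m" "B \<in> carrier_mat m p" "bnd A c" "bnd B d"
  shows "bnd (A * B) (c * d)"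
proof -
  have c0: "0 \<le> c" and d0: "0 \<le> d" using assms by (auto simp: bnd_def)
  have RA: "\<And>i. i < n \<Longrightarrow> (\<Sum>q<m. \<bar>A$$(i,q)\<bar>) \<le> c" and CA: "\<And>q. q < m \<Longrightarrow> (\<Sum>i<n. \<bar>A$$(i,q)\<bar>) \<le> c"
    using assms by (auto simp: bnd_def)
  have RB: "\<And>q. q < m \<Longrightarrow> (\<Sum>l<p. \<bar>B$$(q,l)\<bar>) \<le> d" and CB: "\<And>l. l < p \<Longrightarrow> (\<Sum>q<m. \<bar>B$$(q,l)\<bar>) \<le> d"
    using assms by (auto simp: bnd_def)
  have R: "(\<Sum>l<p. \<bar>(A*B)$$(i,l)\<bar>) \<le> c * d" if i: "i < n" for i
  proof -
    have "(\<Sum>l<p. \<bar>(A*B)$$(i,l)\<bar>) \<le> (\<Sum>l<p. \<Sum>q<m. \<bar>A$$(i,q)\<bar> * \<bar>B$$(q,l)\<bar>)"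
    proof (rule sum_mono)
      fix l assume "l \<in> {..<p}"
      then have "(A*B)$$(i,l) = (\<Sum>q<m. A$$(i,q) * B$$(q,l))" using assms i by (intro mult_idx) auto
      thus "\<bar>(A*B)$$(i,l)\<bar> \<le> (\<Sum>q<m. \<bar>A$$(i,q)\<bar> * \<bar>B$$(q,l)\<bar>)"
        by (metis (no_types, lifting) abs_mult sum.cong sum_abs)
    qed
    also have "\<dots> = (\<Sum>q<m. \<bar>A$$(i,q)\<bar> * (\<Sum>l<p. \<bar>B$$(q,l)\<bar>))"
      by (simp add: sum_distrib_left sum.swap[of _ "{..<p}"])
    also have "\<dots> \<le> (\<Sum>q<m. \<bar>A$$(i,q)\<bar> * d)"
      by (intro sum_mono mult_left_mono) (use RB in auto)
    also have "\<dots> \<le> c * d" using RA[OF i] d0 by (simp add: sum_distrib_right[symmetric] mult_right_mono)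
    finally show ?thesis .
  qed
  have C: "(\<Sum>i<n. \<bar>(A*B)$$(i,l)\<bar>) \<le> c * d" if l: "l < p" for l
  proof -
    have "(\<Sum>i<n. \<bar>(A*B)$$(i,l)\<bar>) \<le> (\<Sum>i<n. \<Sum>q<m. \<bar>A$$(i,q)\<bar> * \<bar>B$$(q,l)\<bar>)"
    proof (rule sum_mono)
      fix i assume "i \<in> {..<n}"
      then have "(A*B)$$(i,l) = (\<Sum>q<m. A$$(i,q) * B$$(q,l))" using assms l by (intro mult_idx) auto
      thus "\<bar>(A*B)$$(i,l)\<bar> \<le> (\<Sum>q<m. \<bar>A$$(i,q)\<bar> * \<bar>B$$(q,l)\<bar>)"
        by (metis (no_types, lifting) abs_mult sum.cong sum_abs)
    qed
    also have "\<dots> = (\<Sum>q<m. (\<Sum>i<n. \<bar>A$$(i,q)\<bar>) * \<bar>B$$(q,l)\<bar>)"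
      by (simp add: sum_distrib_right sum.swap[of _ "{..<n}"])
    also have "\<dots> \<le> (\<Sum>q<m. c * \<bar>B$$(q,l)\<bar>)"
      by (intro sum_mono mult_right_mono) (use CA in auto)
    also have "\<dots> \<le> c * d" using CB[OF l] c0 by (simp add: sum_distrib_left[symmetric] mult_left_mono)
    finally show ?thesis .
  qed
  show ?thesis using R C assms c0 d0 by (simp add: bnd_def)
qed

lemma bnd_one: "bnd (1\<^sub>m n) 1"
proof -
  have "(\<Sum>l<n. \<bar>(1\<^sub>m n :: real mat)$$(i,l)\<bar>) = 1" if "i < n" for i
    using that by (simp add: sum.delta if_distrib cong: if_cong)
  moreover have "(\<Sum>i<n. \<bar>(1\<^sub>m n :: real mat)$$(i,l)\<bar>) = 1" if "l < n" for l
    using that by (simp add: sum.delta' if_distrib cong: if_cong)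
  ultimately show ?thesis by (simp add: bnd_def)
qed

lemma bnd_pow:
  assumes "A \<in> carrier_mat n n" "bnd A c"
  shows "bnd (A ^\<^sub>m k) (c ^ k)"
proof (induction k)
  case 0 thus ?case using assms bnd_one by simp
next
  case (Suc k)
  have "bnd (A ^\<^sub>m k * A) (c ^ k * c)"
    by (rule bnd_mult[OF pow_carrier_mat[OF assms(1)] assms(1) Suc assms(2)])
  thus ?case by (simp add: mult.commute)
qed

lemma circM_carrier[simp]: "circM N \<in> carrier_mat N N" by (simp add: circM_def)
lemma DF_carrier[simp]: "DF N \<in> carrier_mat N N" by (simp add: DF_def)
lemma DB_carrier[simp]: "DB N \<in> carrier_mat N N" by (simp add: DB_def)
lemma D2_carrier[simp]: "D2 N \<in> carrier_mat N N" by (simp add: D2_def mult_carrier_mat[of _ N N])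
lemma Ysamp_carrier[simp]: "Ysamp y a b N \<in> carrier_mat N N" by (simp add: Ysamp_def)
lemma Dk_carrier[simp]: "Dk k N \<in> carrier_mat N N"
  by (simp add: Dk_def mult_carrier_mat[of _ N N])

lemma mat_pm: "X \<in> carrier_mat n m \<Longrightarrow> Z \<in> carrier_mat n m \<Longrightarrow> W \<in> carrier_mat n m \<Longrightarrow>
   (X - Z) + (Z - W) = X - (W :: real mat)"
  by (rule eq_matI) auto

lemma mat_mm: "X \<in> carrier_mat n m \<Longrightarrow> Z \<in> carrier_mat n m \<Longrightarrow> W \<in> carrier_mat n m \<Longrightarrow>
   (X - Z) - (W - Z) = X - (W :: real mat)"
  by (rule eq_matI) auto

lemma comm_prod:
  assumes A: "A \<in> carrier_mat n n" and B: "B \<in> carrier_mat n n" and Y: "Y \<in> carrier_mat n n"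
  shows "commutator (A * B) (Y :: real mat) = A * commutator B Y + commutator A Y * B"
proof -
  have BY: "B * Y \<in> carrier_mat n n" and YB: "Y * B \<in> carrier_mat n n"
   and AY: "A * Y \<in> carrier_mat n n" and YA: "Y * A \<in> carrier_mat n n" using A B Y by auto
  have "A * commutator B Y = A * B * Y - A * Y * B" unfolding commutator_def
    using A B Y by (simp add: mult_minus_distrib_mat[OF A BY YB])
  moreover have "commutator A Y * B = A * Y * B - Y * A * B" unfolding commutator_def
    using A B Y by (simp add: minus_mult_distrib_mat[OF AY YA B])
  ultimately show ?thesis unfolding commutator_def using A B Y
    by (simp add: mat_pm[of _ n n])
qed

lemma comm_final:
  assumes A: "A \<in> carrier_mat n n" and B: "B \<in> carrier_mat n n"
    and P: "P \<in> carrier_mat n n" and Q: "Q \<in> carrier_mat n n"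
    and AB: "A * B = B * A" and PQ: "P * Q = Q * (P :: real mat)"
  shows "commutator (A * P) (B * Q) = A * commutator P B * Q - B * commutator Q A * P"
proof -
  have PB: "P * B \<in> carrier_mat n n" and BP: "B * P \<in> carrier_mat n n"
   and QA: "Q * A \<in> carrier_mat n n" and AQ: "A * Q \<in> carrier_mat n n" using A B P Q by auto
  have "A * commutator P B * Q = (A * (P * B) - A * (B * P)) * Q" unfolding commutator_def
    by (simp add: mult_minus_distrib_mat[OF A PB BP])
  also have "\<dots> = A * (P * B) * Q - A * (B * P) * Q"
    by (rule minus_mult_distrib_mat) (use A B P Q in auto)
  also have "A * (P * B) * Q = A * P * (B * Q)" by (simp add: assoc_mult_mat[OF A mult_carrier_mat[OF P B] Q] assoc_mult_mat[OF P B Q] assoc_mult_mat[OF A P mult_carrier_mat[OF B Q]])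
  also have "A * (B * P) * Q = A * B * (P * Q)" by (simp add: assoc_mult_mat[OF A mult_carrier_mat[OF B P] Q] assoc_mult_mat[OF B P Q] assoc_mult_mat[OF A B mult_carrier_mat[OF P Q]])
  finally have 1: "A * commutator P B * Q = A * P * (B * Q) - A * B * (P * Q)" .
  have "B * commutator Q A * P = (B * (Q * A) - B * (A * Q)) * P" unfolding commutator_def
    by (simp add: mult_minus_distrib_mat[OF B QA AQ])
  also have "\<dots> = B * (Q * A) * P - B * (A * Q) * P"
    by (rule minus_mult_distrib_mat) (use A B P Q in auto)
  also have "B * (Q * A) * P = B * Q * (A * P)" by (simp add: assoc_mult_mat[OF B mult_carrier_mat[OF Q A] P] assoc_mult_mat[OF Q A P] assoc_mult_mat[OF B Q mult_carrier_mat[OF A P]])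
  also have "B * (A * Q) * P = B * A * (Q * P)" by (simp add: assoc_mult_mat[OF B mult_carrier_mat[OF A Q] P] assoc_mult_mat[OF A Q P] assoc_mult_mat[OF B A mult_carrier_mat[OF Q P]])
  also have "B * A * (Q * P) = A * B * (P * Q)" using AB PQ by simp
  finally have 2: "B * commutator Q A * P = B * Q * (A * P) - A * B * (P * Q)" .
  show ?thesis unfolding 1 2 unfolding commutator_def
    by (rule mat_mm[of _ n n, symmetric]) (use A B P Q in auto)
qed

lemma sum_single:
  assumes "finite S" "l \<in> S" "\<And>q. q \<in> S \<Longrightarrow> q \<noteq> l \<Longrightarrow> g q = (0::real)"
  shows "sum g S = g l"
proof -
  have "sum g S = g l + sum g (S - {l})" using assms by (simp add: sum.remove)
  also have "sum g (S - {l}) = 0" using assms by (intro sum.neutral) auto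
  finally show ?thesis by simp
qed

definition sig :: "nat \<Rightarrow> nat \<Rightarrow> nat" where "sig N i = (i + 1) mod N"
definition tau :: "nat \<Rightarrow> nat \<Rightarrow> nat" where "tau N i = (i + N - 1) mod N"

lemma sig_lt: "0 < N \<Longrightarrow> sig N i < N" by (simp add: sig_def)
lemma tau_lt: "0 < N \<Longrightarrow> tau N i < N" by (simp add: tau_def)
lemma tau_sig: assumes that: "i < N" shows "tau N (sig N i) = i"
proof (cases "i + 1 < N")
  case True thus ?thesis by (simp add: sig_def tau_def)
next
  case False
  hence "i + 1 = N" using that by simp
  thus ?thesis using \<open>i < N\<close> by (simp add: sig_def tau_def)
qed
lemma sig_tau: assumes that: "i < N" shows "sig N (tau N i) = i"
proof (cases "i = 0")
  case True thus ?thesis using that by (simp add: sig_def tau_def)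
next
  case False
  hence e: "i + N - 1 = (i - 1) + N" by simp
  have "tau N i = i - 1" unfolding tau_def e using that by simp
  thus ?thesis using False that by (simp add: sig_def)
qed
lemma sig_inj: "i < N \<Longrightarrow> l < N \<Longrightarrow> sig N i = sig N l \<longleftrightarrow> i = l"
  by (metis tau_sig)
lemma sig_eq_tau: "i < N \<Longrightarrow> l < N \<Longrightarrow> i = sig N l \<longleftrightarrow> l = tau N i"
  by (metis tau_sig sig_tau)

lemma circM_idx: "i < N \<Longrightarrow> l < N \<Longrightarrow> circM N $$ (i,l) =
   (if l = i then -1 else 0) + (if l = sig N i then 1 else 0)"
  by (simp add: circM_def sig_def)

lemma comm_diag:
  assumes A: "A \<in> carrier_mat n n" and i: "i < n" and l: "l < n"
  shows "commutator A (Ysamp y a b n) $$ (i,l) = A$$(i,l) * (y (grid_pt a b n l) - y (grid_pt a b n i))"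
proof -
  have Y: "Ysamp y a b n \<in> carrier_mat n n" by simp
  have 1: "(A * Ysamp y a b n) $$ (i,l) = A$$(i,l) * y (grid_pt a b n l)"
    unfolding mult_idx[OF A Y i l]
    by (subst sum_single[of _ l]) (use l in \<open>auto simp: Ysamp_def\<close>)
  have 2: "(Ysamp y a b n * A) $$ (i,l) = y (grid_pt a b n i) * A$$(i,l)"
    unfolding mult_idx[OF Y A i l]
    by (subst sum_single[of _ i]) (use i in \<open>auto simp: Ysamp_def\<close>)
  have "commutator A (Ysamp y a b n) $$ (i,l) = (A * Ysamp y a b n) $$ (i,l) - (Ysamp y a b n * A) $$ (i,l)"
    unfolding commutator_def using A i l by (subst index_minus_mat) (auto simp: Ysamp_def)
  thus ?thesis using 1 2 by (simp add: algebra_simps)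
qed

lemma bnd_Ysamp:
  assumes "\<And>i. i < N \<Longrightarrow> \<bar>y (grid_pt a b N i)\<bar> \<le> K" "0 \<le> K"
  shows "bnd (Ysamp y a b N) K"
proof -
  have "(\<Sum>l<N. \<bar>Ysamp y a b N $$ (i,l)\<bar>) = \<bar>y (grid_pt a b N i)\<bar>" if "i < N" for i
    by (subst sum_single[of _ i]) (use that in \<open>auto simp: Ysamp_def\<close>)
  moreover have "(\<Sum>i<N. \<bar>Ysamp y a b N $$ (i,l)\<bar>) = \<bar>y (grid_pt a b N l)\<bar>" if "l < N" for l
    by (subst sum_single[of _ l]) (use that in \<open>auto simp: Ysamp_def\<close>)
  ultimately show ?thesis using assms by (simp add: bnd_def Ysamp_def)
qed

lemma Ysamp_comm: "Ysamp y1 a b N * Ysamp y2 a b N = Ysamp y2 a b N * Ysamp y1 a b N"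
proof (rule eq_matI)
  fix i l assume i: "i < dim_row (Ysamp y2 a b N * Ysamp y1 a b N)" and l: "l < dim_col (Ysamp y2 a b N * Ysamp y1 a b N)"
  hence i: "i < N" and l: "l < N" by (auto simp: Ysamp_def)
  have "(Ysamp y1 a b N * Ysamp y2 a b N) $$ (i,l) = Ysamp y1 a b N $$ (i,l) * Ysamp y2 a b N $$ (l,l)"
    unfolding mult_idx[OF Ysamp_carrier Ysamp_carrier i l]
    by (subst sum_single[of _ l]) (use i l in \<open>auto simp: Ysamp_def\<close>)
  moreover have "(Ysamp y2 a b N * Ysamp y1 a b N) $$ (i,l) = Ysamp y2 a b N $$ (i,l) * Ysamp y1 a b N $$ (l,l)"
    unfolding mult_idx[OF Ysamp_carrier Ysamp_carrier i l]
    by (subst sum_single[of _ l]) (use i l in \<open>auto simp: Ysamp_def\<close>)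
  ultimately show "(Ysamp y1 a b N * Ysamp y2 a b N) $$ (i,l) = (Ysamp y2 a b N * Ysamp y1 a b N) $$ (i,l)"
    using i l by (simp add: Ysamp_def)
qed (auto simp: Ysamp_def)

lemma bnd_shift:
  assumes A: "A \<in> carrier_mat N N" and c: "0 \<le> c" "0 \<le> d"
    and e: "\<And>i l. i < N \<Longrightarrow> l < N \<Longrightarrow> \<bar>A$$(i,l)\<bar> \<le> (if l = i then c else 0) + (if l = sig N i then d else 0)"
  shows "bnd A (c + d)"
proof -
  have R: "(\<Sum>l<N. \<bar>A$$(i,l)\<bar>) \<le> c + d" if i: "i < N" for i
  proof -
    have "(\<Sum>l<N. \<bar>A$$(i,l)\<bar>) \<le> (\<Sum>l<N. (if l = i then c else 0) + (if l = sig N i then d else 0))"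
      by (rule sum_mono) (use e i in auto)
    also have "\<dots> = c + d" using i sig_lt[of N i] by (simp add: sum.distrib)
    finally show ?thesis .
  qed
  have C: "(\<Sum>i<N. \<bar>A$$(i,l)\<bar>) \<le> c + d" if l: "l < N" for l
  proof -
    have "(\<Sum>i<N. \<bar>A$$(i,l)\<bar>) \<le> (\<Sum>i<N. (if l = i then c else 0) + (if l = sig N i then d else 0))"
      by (rule sum_mono) (use e l in auto)
    also have "\<dots> = c + (\<Sum>i<N. (if l = sig N i then d else 0))" using l by (simp add: sum.distrib)
    also have "(\<Sum>i<N. (if l = sig N i then d else 0)) = (if l = sig N (tau N l) then d else 0)"
      by (rule sum_single) (use l tau_lt[of N l] sig_eq_tau in auto)
    also have "\<dots> = d" using l sig_tau by simp
    finally show ?thesis .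
  qed
  show ?thesis using R C A c by (simp add: bnd_def)
qed

lemma bnd_circM: "bnd (circM N) 2"
proof -
  have "bnd (circM N) (1 + 1)"
    by (rule bnd_shift[OF circM_carrier]) (auto simp: circM_idx)
  thus ?thesis by simp
qed

lemma bnd_DF: "bnd (DF N) (2 * real N)"
  using bnd_smult[OF bnd_circM, of "real N"] by (simp add: DF_def mult.commute)

lemma bnd_DB: "bnd (DB N) (2 * real N)"
  unfolding DB_def by (intro bnd_uminus bnd_transpose bnd_DF)

lemma dims[simp]: "dim_row (circM N) = N" "dim_col (circM N) = N" "dim_row (DF N) = N" "dim_col (DF N) = N"
  "dim_row (DB N) = N" "dim_col (DB N) = N" "dim_row (D2 N) = N" "dim_col (D2 N) = N"
  "dim_row (Dk k N) = N" "dim_col (Dk k N) = N" "dim_row (Ysamp y a b N) = N" "dim_col (Ysamp y a b N) = N"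
  using circM_carrier[of N] DF_carrier[of N] DB_carrier[of N] D2_carrier[of N] Dk_carrier[of k N]
    Ysamp_carrier[of y a b N] by (auto simp del: circM_carrier DF_carrier DB_carrier D2_carrier Dk_carrier Ysamp_carrier)

lemma commutator_carrier[simp]: "A \<in> carrier_mat n n \<Longrightarrow> B \<in> carrier_mat n n \<Longrightarrow> commutator A B \<in> carrier_mat n n"
  unfolding commutator_def by auto

definition mm :: "nat \<Rightarrow> nat \<Rightarrow> nat \<Rightarrow> real" where
  "mm N i q = (if q = i then -1 else 0) + (if q = sig N i then 1 else 0)"

lemma mm_sum_eq:
  assumes i: "i < N" and l: "l < N"
  shows "(\<Sum>q<N. mm N i q * mm N l q) = (\<Sum>q<N. mm N q i * mm N q l)"
proof -
  have N: "0 < N" using i by simp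
  have "(\<Sum>q<N. mm N i q * mm N l q) = (\<Sum>q<N. (if q = i then - mm N l q else 0) + (if q = sig N i then mm N l q else 0))"
    by (rule sum.cong) (auto simp: mm_def)
  also have "\<dots> = - mm N l i + mm N l (sig N i)" using i sig_lt[OF N, of i] by (simp add: sum.distrib)
  finally have L: "(\<Sum>q<N. mm N i q * mm N l q) = - mm N l i + mm N l (sig N i)" .
  have "(\<Sum>q<N. mm N q i * mm N q l) = (\<Sum>q<N. (if q = i then - mm N q l else 0) + (if q = tau N i then mm N q l else 0))"
    by (rule sum.cong) (use i sig_eq_tau[OF i] in \<open>auto simp: mm_def\<close>)
  also have "\<dots> = - mm N i l + mm N (tau N i) l" using i tau_lt[OF N, of i] by (simp add: sum.distrib)
  finally have R: "(\<Sum>q<N. mm N q i * mm N q l) = - mm N i l + mm N (tau N i) l" .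
  have s1: "sig N i = sig N l \<longleftrightarrow> i = l" using sig_inj i l by blast
  have s2: "i = sig N l \<longleftrightarrow> l = tau N i" using sig_eq_tau i l by blast
  have s3: "sig N (tau N i) = i" using sig_tau i by blast
  show ?thesis unfolding L R unfolding mm_def using s1 s2 s3 by auto
qed

lemma DF_idx: "i < N \<Longrightarrow> q < N \<Longrightarrow> DF N $$ (i,q) = real N * mm N i q"
  unfolding DF_def by (subst index_smult_mat) (auto simp: circM_idx mm_def)
lemma DB_idx: "q < N \<Longrightarrow> l < N \<Longrightarrow> DB N $$ (q,l) = - (real N * mm N l q)"
  by (simp add: DB_def DF_idx)

lemma DF_DB_comm: "DF N * DB N = DB N * DF N"
proof (rule eq_matI)
  fix i l assume "i < dim_row (DB N * DF N)" "l < dim_col (DB N * DF N)"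
  hence i: "i < N" and l: "l < N" by (auto simp: DB_def DF_def circM_def)
  have "(DF N * DB N) $$ (i,l) = (\<Sum>q<N. real N * mm N i q * - (real N * mm N l q))"
    unfolding mult_idx[OF DF_carrier DB_carrier i l] by (rule sum.cong) (auto simp: DF_idx DB_idx i l)
  also have "\<dots> = - (real N * real N) * (\<Sum>q<N. mm N i q * mm N l q)"
    by (simp add: sum_distrib_left algebra_simps)
  also have "\<dots> = - (real N * real N) * (\<Sum>q<N. mm N q i * mm N q l)" using mm_sum_eq[OF i l] by simp
  also have "\<dots> = (\<Sum>q<N. - (real N * mm N q i) * (real N * mm N q l))"
    by (simp add: sum_distrib_left algebra_simps)
  also have "\<dots> = (DB N * DF N) $$ (i,l)"
    unfolding mult_idx[OF DB_carrier DF_carrier i l] by (rule sum.cong) (auto simp: DF_idx DB_idx i l)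
  finally show "(DF N * DB N) $$ (i,l) = (DB N * DF N) $$ (i,l)" .
qed (auto simp: DB_def DF_def circM_def)

lemma mm_abs: "\<bar>mm N i l\<bar> \<le> 1 \<or> l = i"
  by (auto simp: mm_def)

lemma grid_in: "0 < N \<Longrightarrow> i \<le> N \<Longrightarrow> a \<le> b \<Longrightarrow> a \<le> grid_pt a b N i \<and> grid_pt a b N i \<le> b"
proof -
  assume N: "0 < N" and i: "i \<le> N" and ab: "a \<le> b"
  have "0 \<le> (b - a) * real i / real N" using ab by simp
  moreover have "(b - a) * real i / real N \<le> (b - a)"
    using N i ab by (simp add: divide_le_eq mult_left_mono)
  ultimately show ?thesis by (simp add: grid_pt_def)
qed

lemma step_lip:
  assumes ab: "a < b" and L: "0 \<le> L"
    and lip: "\<And>s t. a \<le> s \<Longrightarrow> s \<le> b \<Longrightarrow> a \<le> t \<Longrightarrow> t \<le> b \<Longrightarrow> \<bar>y s - y t\<bar> \<le> L * \<bar>s - t\<bar>"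
    and per: "periodic_on_len (b - a) y" and i: "i < N"
  shows "\<bar>y (grid_pt a b N (sig N i)) - y (grid_pt a b N i)\<bar> \<le> L * (b - a) / real N"
proof -
  have N: "0 < N" using i by simp
  have e: "y (grid_pt a b N (sig N i)) = y (grid_pt a b N (i + 1))"
  proof (cases "i + 1 < N")
    case True thus ?thesis by (simp add: sig_def)
  next
    case False
    hence "i + 1 = N" using i by simp
    hence "sig N i = 0" "grid_pt a b N (i+1) = a + (b - a)" using N by (auto simp: sig_def grid_pt_def)
    moreover have "y (a + (b - a)) = y a" using per[unfolded periodic_on_len_def, rule_format, of a] by simp
    ultimately show ?thesis by (simp add: grid_pt_def)
  qed
  have "(b - a) * real (i + 1) / real N = (b - a) * real i / real N + (b - a) / real N"
    by (simp add: distrib_left add_divide_distrib)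
  hence d: "grid_pt a b N (i + 1) - grid_pt a b N i = (b - a) / real N"
    unfolding grid_pt_def by simp
  have "\<bar>y (grid_pt a b N (i + 1)) - y (grid_pt a b N i)\<bar> \<le> L * \<bar>(b - a) / real N\<bar>"
    using lip[of "grid_pt a b N (i + 1)" "grid_pt a b N i"] grid_in[OF N, of "i+1" a b] grid_in[OF N, of i a b] i ab d
    by simp
  thus ?thesis using e ab by simp
qed

lemma bnd_comm_DF:
  assumes ab: "a < b" and L: "0 \<le> L"
    and lip: "\<And>s t. a \<le> s \<Longrightarrow> s \<le> b \<Longrightarrow> a \<le> t \<Longrightarrow> t \<le> b \<Longrightarrow> \<bar>y s - y t\<bar> \<le> L * \<bar>s - t\<bar>"
    and per: "periodic_on_len (b - a) y"
  shows "bnd (commutator (DF N) (Ysamp y a b N)) (L * (b - a))"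
proof -
  have "bnd (commutator (DF N) (Ysamp y a b N)) (0 + L * (b - a))"
  proof (rule bnd_shift)
    show "commutator (DF N) (Ysamp y a b N) \<in> carrier_mat N N" by simp
    show "0 \<le> L * (b - a)" using L ab by simp
    show "0 \<le> (0::real)" by simp
    fix i l assume i: "i < N" and l: "l < N"
    have E: "commutator (DF N) (Ysamp y a b N) $$ (i,l) = real N * mm N i l * (y (grid_pt a b N l) - y (grid_pt a b N i))"
      using comm_diag[OF DF_carrier i l] DF_idx[OF i l] by simp
    show "\<bar>commutator (DF N) (Ysamp y a b N) $$ (i,l)\<bar> \<le> (if l = i then 0 else 0) + (if l = sig N i then L * (b - a) else 0)"
    proof (cases "l = sig N i")
      case True
      have "\<bar>real N * mm N i l * (y (grid_pt a b N l) - y (grid_pt a b N i))\<bar>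
          \<le> real N * 1 * (L * (b - a) / real N)"
      proof (cases "l = i")
        case True thus ?thesis using L ab by simp
      next
        case False
        hence m: "\<bar>mm N i l\<bar> \<le> 1" using mm_abs by blast
        have "\<bar>y (grid_pt a b N l) - y (grid_pt a b N i)\<bar> \<le> L * (b - a) / real N"
          using step_lip[OF ab L lip per i] True by simp
        thus ?thesis unfolding abs_mult
          by (intro mult_mono m) auto
      qed
      thus ?thesis using E True i by simp
    next
      case False
      hence "mm N i l = (if l = i then -1 else 0)" by (simp add: mm_def)
      hence "real N * mm N i l * (y (grid_pt a b N l) - y (grid_pt a b N i)) = 0" by auto
      thus ?thesis using E False by simp
    qed
  qed
  thus ?thesis by simp
qed

lemma comm_DB_transpose:
  "commutator (DB N) (Ysamp y a b N) = transpose_mat (commutator (DF N) (Ysamp y a b N))"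
proof (rule eq_matI)
  fix i l assume "i < dim_row (transpose_mat (commutator (DF N) (Ysamp y a b N)))"
    "l < dim_col (transpose_mat (commutator (DF N) (Ysamp y a b N)))"
  hence i: "i < N" and l: "l < N" by (auto simp: commutator_def)
  have 1: "commutator (DB N) (Ysamp y a b N) $$ (i,l) = - (real N * mm N l i) * (y (grid_pt a b N l) - y (grid_pt a b N i))"
    using comm_diag[OF DB_carrier i l] DB_idx[OF i l] by simp
  have c: "commutator (DF N) (Ysamp y a b N) \<in> carrier_mat N N" by simp
  have 2: "transpose_mat (commutator (DF N) (Ysamp y a b N)) $$ (i,l) = commutator (DF N) (Ysamp y a b N) $$ (l,i)"
    using i l carrier_matD[OF c] by (subst index_transpose_mat) auto
  have 3: "commutator (DF N) (Ysamp y a b N) $$ (l,i) = real N * mm N l i * (y (grid_pt a b N i) - y (grid_pt a b N l))"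
    using comm_diag[OF DF_carrier l i] DF_idx[OF l i] by simp
  show "commutator (DB N) (Ysamp y a b N) $$ (i,l) = transpose_mat (commutator (DF N) (Ysamp y a b N)) $$ (i,l)"
    unfolding 1 2 3 by (simp add: algebra_simps)
qed (use commutator_carrier in \<open>auto simp: commutator_def\<close>)

lemma Dk_0: "Dk 0 N = 1\<^sub>m N" by (simp add: Dk_def)
lemma Dk_1: "Dk (Suc 0) N = DF N" by (simp add: Dk_def)
lemma Dk_SS: "Dk (Suc (Suc k)) N = Dk k N * D2 N"
proof (cases "even k")
  case True thus ?thesis by (simp add: Dk_def)
next
  case False
  then obtain m where k: "k = 2 * m + 1" by (metis oddE)
  have "Dk (Suc (Suc k)) N = DF N * (D2 N ^\<^sub>m m * D2 N)" using k by (simp add: Dk_def)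
  also have "\<dots> = DF N * D2 N ^\<^sub>m m * D2 N"
    by (rule assoc_mult_mat[symmetric, of _ N N _ N _ N]) auto
  also have "DF N * D2 N ^\<^sub>m m = Dk k N" using k by (simp add: Dk_def)
  finally show ?thesis .
qed

lemma nat_induct012:
  assumes "P 0" "P 1" "\<And>k. P k \<Longrightarrow> P (Suc (Suc k))"
  shows "P k"
proof -
  have "P k \<and> P (Suc k)" by (induction k) (use assms in auto)
  thus ?thesis by simp
qed

lemma DF_D2_comm: "DF N * D2 N = D2 N * DF N"
proof -
  have "DF N * D2 N = (DF N * DB N) * DF N" unfolding D2_def
    by (rule assoc_mult_mat[symmetric, of _ N N _ N _ N]) auto
  also have "\<dots> = (DB N * DF N) * DF N" by (simp add: DF_DB_comm)
  finally show ?thesis unfolding D2_def .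
qed

lemma comm4: "A \<in> carrier_mat n n \<Longrightarrow> B \<in> carrier_mat n n \<Longrightarrow> C \<in> carrier_mat n n \<Longrightarrow>
  A * B = B * A \<Longrightarrow> A * C = C * A \<Longrightarrow> A * (B * C) = (B * C) * (A :: real mat)"
proof -
  assume A: "A \<in> carrier_mat n n" and B: "B \<in> carrier_mat n n" and C: "C \<in> carrier_mat n n"
    and AB: "A * B = B * A" and AC: "A * C = C * A"
  have "A * (B * C) = (A * B) * C" using A B C by simp
  also have "\<dots> = B * (A * C)" using A B C AB by simp
  also have "\<dots> = B * (C * A)" using AC by simp
  also have "\<dots> = (B * C) * A" using A B C by simp
  finally show ?thesis .
qed

lemma D2_Dk_comm: "D2 N * Dk k N = Dk k N * D2 N"
  by (induction k rule: nat_induct012) (auto simp: Dk_0 Dk_1 Dk_SS DF_D2_comm intro: comm4[of _ N])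

lemma DF_Dk_comm: "DF N * Dk k N = Dk k N * DF N"
  by (induction k rule: nat_induct012) (auto simp: Dk_0 Dk_1 Dk_SS DF_D2_comm intro: comm4[of _ N])

lemma Dk_comm: "Dk k N * Dk j N = Dk j N * Dk k N"
  by (induction j rule: nat_induct012)
     (auto simp: Dk_0 Dk_1 Dk_SS DF_Dk_comm D2_Dk_comm[symmetric] intro: comm4[of _ N])

lemma bnd_D2: "bnd (D2 N) ((2 * real N) ^ 2)"
  using bnd_mult[OF DB_carrier DF_carrier bnd_DB bnd_DF] by (simp add: D2_def power2_eq_square)

lemma bnd_Dk: "bnd (Dk k N) ((2 * real N) ^ k)"
proof (induction k rule: nat_induct012)
  case 1 show ?case using bnd_one by (simp add: Dk_0)
next
  case 2 show ?case using bnd_DF by (simp add: Dk_1)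
next
  case (3 k)
  have e: "(2 * real N) ^ k * (2 * real N) ^ 2 = (2 * real N) ^ (Suc (Suc k))"
    by (metis power_add add_2_eq_Suc')
  show ?case using bnd_mult[OF Dk_carrier D2_carrier 3 bnd_D2] unfolding e Dk_SS .
qed

lemma comm_one: "commutator (1\<^sub>m N) (Y :: real mat) = 0\<^sub>m N N" if "Y \<in> carrier_mat N N"
  unfolding commutator_def using that by (intro eq_matI) auto

lemma bnd_zero: "bnd (0\<^sub>m n m) 0" by (simp add: bnd_def)

lemma bnd_comm_Dk:
  assumes Y: "Y \<in> carrier_mat N N" and c: "0 \<le> c"
    and cF: "bnd (commutator (DF N) Y) c" and cB: "bnd (commutator (DB N) Y) c"
  shows "bnd (commutator (Dk k N) Y) (real k * (2 * real N) ^ (k - 1) * c)"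
proof (induction k rule: nat_induct012)
  case 1 show ?case using bnd_zero by (simp add: Dk_0 comm_one[OF Y])
next
  case 2 show ?case using cF by (simp add: Dk_1)
next
  case (3 k)
  let ?x = "2 * real N"
  have cD2: "bnd (commutator (D2 N) Y) (?x * c + c * ?x)"
    unfolding D2_def comm_prod[OF DB_carrier DF_carrier Y]
    by (rule bnd_add[OF mult_carrier_mat[OF DB_carrier commutator_carrier[OF DF_carrier Y]]
         mult_carrier_mat[OF commutator_carrier[OF DB_carrier Y] DF_carrier]
         bnd_mult[OF DB_carrier commutator_carrier[OF DF_carrier Y] bnd_DB cF]
         bnd_mult[OF commutator_carrier[OF DB_carrier Y] DF_carrier cB bnd_DF]])
  have "bnd (commutator (Dk (Suc (Suc k)) N) Y)
     (?x ^ k * (?x * c + c * ?x) + real k * ?x ^ (k - 1) * c * ?x ^ 2)"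
    unfolding Dk_SS comm_prod[OF Dk_carrier D2_carrier Y]
    by (rule bnd_add[OF mult_carrier_mat[OF Dk_carrier commutator_carrier[OF D2_carrier Y]]
         mult_carrier_mat[OF commutator_carrier[OF Dk_carrier Y] D2_carrier]
         bnd_mult[OF Dk_carrier commutator_carrier[OF D2_carrier Y] bnd_Dk cD2]
         bnd_mult[OF commutator_carrier[OF Dk_carrier Y] D2_carrier 3 bnd_D2]])
  moreover have "?x ^ k * (?x * c + c * ?x) + real k * ?x ^ (k - 1) * c * ?x ^ 2
      = real (Suc (Suc k)) * ?x ^ (Suc (Suc k) - 1) * c"
  proof (cases k)
    case 0 thus ?thesis by simp
  next
    case (Suc m)
    thus ?thesis by (simp add: algebra_simps power2_eq_square)
  qed
  ultimately show ?case by simp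
qed

lemma smooth_lip:
  assumes sm: "smooth_fun y" and ab: "a < b"
  shows "\<exists>L\<ge>0. \<forall>s t. a \<le> s \<longrightarrow> s \<le> b \<longrightarrow> a \<le> t \<longrightarrow> t \<le> b \<longrightarrow> \<bar>y s - y t\<bar> \<le> L * \<bar>s - t\<bar>"
proof -
  have d0: "y differentiable at x" for x using sm[unfolded smooth_fun_def, rule_format, of 0 x] by simp
  have d1: "deriv y differentiable at x" for x using sm[unfolded smooth_fun_def, rule_format, of 1 x] by simp
  have "continuous_on {a..b} (deriv y)"
    by (rule differentiable_imp_continuous_on, rule differentiable_at_imp_differentiable_on) (use d1 in auto)
  then obtain B where B: "B \<ge> 0" "\<And>x. x \<in> {a..b} \<Longrightarrow> norm (deriv y x) \<le> B"
    using continuous_on_compact_bound[OF compact_Icc] by blast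
  have D: "DERIV y x :> deriv y x" for x using d0 DERIV_deriv_iff_real_differentiable by blast
  have main: "\<bar>y t - y s\<bar> \<le> B * (t - s)" if "a \<le> s" "s < t" "t \<le> b" for s t
  proof -
    obtain z where z: "s < z" "z < t" "y t - y s = (t - s) * deriv y z"
      using MVT2[OF \<open>s < t\<close> D] by blast
    have "\<bar>deriv y z\<bar> \<le> B" using B(2)[of z] z that by simp
    hence "\<bar>(t - s) * deriv y z\<bar> \<le> (t - s) * B" using that
      by (simp add: abs_mult mult_left_mono)
    thus ?thesis using z by (simp add: mult.commute)
  qed
  have "\<bar>y s - y t\<bar> \<le> B * \<bar>s - t\<bar>" if "a \<le> s" "s \<le> b" "a \<le> t" "t \<le> b" for s t
  proof (cases s t rule: linorder_cases)
    case less thus ?thesis using main[of s t] that by (simp add: abs_minus_commute)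
  next
    case equal thus ?thesis by simp
  next
    case greater thus ?thesis using main[of t s] that by simp
  qed
  thus ?thesis using B(1) by blast
qed

lemma smooth_bound:
  assumes sm: "smooth_fun y"
  shows "\<exists>K\<ge>0. \<forall>x. a \<le> x \<longrightarrow> x \<le> b \<longrightarrow> \<bar>y x\<bar> \<le> K"
proof -
  have d0: "y differentiable at x" for x using sm[unfolded smooth_fun_def, rule_format, of 0 x] by simp
  have "continuous_on {a..b} y"
    by (rule differentiable_imp_continuous_on, rule differentiable_at_imp_differentiable_on) (use d0 in auto)
  then obtain K where "K \<ge> 0" "\<And>x. x \<in> {a..b} \<Longrightarrow> norm (y x) \<le> K"
    using continuous_on_compact_bound[OF compact_Icc] by blast
  thus ?thesis by auto
qed

theorem lemma4p6:
  fixes a b :: real and k j :: nat and yk yj :: "real \<Rightarrow> real"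
  assumes "a < b" and "k \<ge> 1" and "j \<ge> 1"
    and "smooth_fun yk" and "smooth_fun yj"
    and "periodic_on_len (b - a) yk" and "periodic_on_len (b - a) yj"
  shows "ht_le (\<lambda>N. commutator (Ysamp yk a b N * Dk k N) (Ysamp yj a b N * Dk j N)) (k + j - 1)"
proof -
  note ab = assms(1)
  obtain Lk where Lk: "Lk \<ge> 0" "\<And>s t. a \<le> s \<Longrightarrow> s \<le> b \<Longrightarrow> a \<le> t \<Longrightarrow> t \<le> b \<Longrightarrow> \<bar>yk s - yk t\<bar> \<le> Lk * \<bar>s - t\<bar>"
    using smooth_lip[OF assms(4) ab] by blast
  obtain Lj where Lj: "Lj \<ge> 0" "\<And>s t. a \<le> s \<Longrightarrow> s \<le> b \<Longrightarrow> a \<le> t \<Longrightarrow> t \<le> b \<Longrightarrow> \<bar>yj s - yj t\<bar> \<le> Lj * \<bar>s - t\<bar>"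
    using smooth_lip[OF assms(5) ab] by blast
  obtain Kk where Kk: "Kk \<ge> 0" "\<And>x. a \<le> x \<Longrightarrow> x \<le> b \<Longrightarrow> \<bar>yk x\<bar> \<le> Kk"
    using smooth_bound[OF assms(4), of a b] by blast
  obtain Kj where Kj: "Kj \<ge> 0" "\<And>x. a \<le> x \<Longrightarrow> x \<le> b \<Longrightarrow> \<bar>yj x\<bar> \<le> Kj"
    using smooth_bound[OF assms(5), of a b] by blast
  define cst where "cst = Kk * (real k * 2 ^ (k - 1) * (Lj * (b - a))) * 2 ^ j
      + Kj * (real j * 2 ^ (j - 1) * (Lk * (b - a))) * 2 ^ k"
  have bound: "mat_norm2 (commutator (Ysamp yk a b N * Dk k N) (Ysamp yj a b N * Dk j N)) \<le> cst * real N ^ (k + j - 1)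
     \<and> 0 \<le> mat_norm2 (commutator (Ysamp yk a b N * Dk k N) (Ysamp yj a b N * Dk j N))"
    if N: "N \<ge> 1" for N
  proof -
    let ?Yk = "Ysamp yk a b N" and ?Yj = "Ysamp yj a b N" and ?x = "2 * real N"
    have grid: "a \<le> grid_pt a b N i \<and> grid_pt a b N i \<le> b" if "i < N" for i
      using grid_in[of N i a b] that N ab by simp
    have bYk: "bnd ?Yk Kk" by (rule bnd_Ysamp) (use Kk grid in auto)
    have bYj: "bnd ?Yj Kj" by (rule bnd_Ysamp) (use Kj grid in auto)
    have cFk: "bnd (commutator (DF N) ?Yk) (Lk * (b - a))" by (rule bnd_comm_DF[OF ab Lk assms(6)])
    have cFj: "bnd (commutator (DF N) ?Yj) (Lj * (b - a))" by (rule bnd_comm_DF[OF ab Lj assms(7)])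
    have cBk: "bnd (commutator (DB N) ?Yk) (Lk * (b - a))" unfolding comm_DB_transpose by (rule bnd_transpose[OF cFk])
    have cBj: "bnd (commutator (DB N) ?Yj) (Lj * (b - a))" unfolding comm_DB_transpose by (rule bnd_transpose[OF cFj])
    have Ek: "bnd (commutator (Dk k N) ?Yj) (real k * ?x ^ (k - 1) * (Lj * (b - a)))"
      by (rule bnd_comm_Dk[OF Ysamp_carrier _ cFj cBj]) (use Lj ab in simp)
    have Ej: "bnd (commutator (Dk j N) ?Yk) (real j * ?x ^ (j - 1) * (Lk * (b - a)))"
      by (rule bnd_comm_Dk[OF Ysamp_carrier _ cFk cBk]) (use Lk ab in simp)
    have eq: "commutator (?Yk * Dk k N) (?Yj * Dk j N)
        = ?Yk * commutator (Dk k N) ?Yj * Dk j N - ?Yj * commutator (Dk j N) ?Yk * Dk k N"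
      by (rule comm_final[OF Ysamp_carrier Ysamp_carrier Dk_carrier Dk_carrier Ysamp_comm Dk_comm])
    have T1: "bnd (?Yk * commutator (Dk k N) ?Yj * Dk j N) (Kk * (real k * ?x ^ (k - 1) * (Lj * (b - a))) * ?x ^ j)"
      by (rule bnd_mult[OF mult_carrier_mat[OF Ysamp_carrier commutator_carrier[OF Dk_carrier Ysamp_carrier]] Dk_carrier
            bnd_mult[OF Ysamp_carrier commutator_carrier[OF Dk_carrier Ysamp_carrier] bYk Ek] bnd_Dk])
    have T2: "bnd (?Yj * commutator (Dk j N) ?Yk * Dk k N) (Kj * (real j * ?x ^ (j - 1) * (Lk * (b - a))) * ?x ^ k)"
      by (rule bnd_mult[OF mult_carrier_mat[OF Ysamp_carrier commutator_carrier[OF Dk_carrier Ysamp_carrier]] Dk_carrier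
            bnd_mult[OF Ysamp_carrier commutator_carrier[OF Dk_carrier Ysamp_carrier] bYj Ej] bnd_Dk])
    have BB: "bnd (commutator (?Yk * Dk k N) (?Yj * Dk j N))
       (Kk * (real k * ?x ^ (k - 1) * (Lj * (b - a))) * ?x ^ j + Kj * (real j * ?x ^ (j - 1) * (Lk * (b - a))) * ?x ^ k)"
      unfolding eq
      by (rule bnd_minus[OF _ _ T1 T2]) (auto intro!: mult_carrier_mat[of _ N N] commutator_carrier)
    have p1: "?x ^ (k - 1) * ?x ^ j = 2 ^ (k - 1) * 2 ^ j * real N ^ (k + j - 1)"
    proof -
      have e: "k + j - 1 = (k - 1) + j" using assms(2) by simp
      have "?x ^ (k - 1) * ?x ^ j = ?x ^ (k + j - 1)" unfolding e by (simp only: power_add)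
      also have "\<dots> = 2 ^ (k - 1) * 2 ^ j * real N ^ (k + j - 1)"
        using assms(2) by (simp add: power_mult_distrib power_add[symmetric])
      finally show ?thesis .
    qed
    have p2: "?x ^ (j - 1) * ?x ^ k = 2 ^ (j - 1) * 2 ^ k * real N ^ (k + j - 1)"
    proof -
      have e: "k + j - 1 = (j - 1) + k" using assms(3) by simp
      have "?x ^ (j - 1) * ?x ^ k = ?x ^ (k + j - 1)" unfolding e by (simp only: power_add)
      also have "\<dots> = 2 ^ (j - 1) * 2 ^ k * real N ^ (k + j - 1)"
      proof -
        have t: "(2::real) ^ (k + j - 1) = 2 ^ (j - 1) * 2 ^ k" unfolding e by (simp only: power_add)
        show ?thesis by (simp only: power_mult_distrib t)
      qed
      finally show ?thesis .
    qed
    have "Kk * (real k * ?x ^ (k - 1) * (Lj * (b - a))) * ?x ^ j + Kj * (real j * ?x ^ (j - 1) * (Lk * (b - a))) * ?x ^ k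
       = Kk * real k * (Lj * (b - a)) * (?x ^ (k - 1) * ?x ^ j) + Kj * real j * (Lk * (b - a)) * (?x ^ (j - 1) * ?x ^ k)"
      by (simp only: mult_ac)
    also have "\<dots> = cst * real N ^ (k + j - 1)" unfolding p1 p2 cst_def by (simp add: algebra_simps)
    finally show ?thesis using bnd_norm[OF BB] by simp
  qed
  show ?thesis unfolding ht_le_def
  proof (rule bigoI[where c = cst])
    show "\<forall>\<^sub>F N in at_top. norm (mat_norm2 (commutator (Ysamp yk a b N * Dk k N) (Ysamp yj a b N * Dk j N)))
        \<le> cst * norm (real N ^ (k + j - 1))"
      unfolding eventually_at_top_linorder
      by (rule exI[of _ 1]) (use bound in auto)
  qed
qed

end
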